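(* Let $g\geq 3$ and let $\eta$ be an integer with $2\leq\eta\leq g$. Then there exist non-negative integers $g_1$, $i$ and $j$ such that (1) $2g_1\geq g-2$; (2) $i+j+1=\eta$; (3) $i+2j+2g_1=2g-2$; (4) $\underbrace{\mathcal{M}_{0,3}\times\cdots\times\mathcal{M}_{0,3}}_{i\text{ copies}}\times\underbrace{\mathcal{M}_{1,2}\times\cdots\times\mathcal{M}_{1,2}}_{j\text{ copies}}\times\mathcal{M}_{g_1,2}\subset\partial\mathcal{M}_g$, i.e. a closed surface of genus $g$ can be pinched along disjoint simple closed curves to a nodal surface whose components are exactly $i$ thrice-punctured spheres, $j$ surfaces of genus $1$ with $2$ punctures and one surface of genus $g_1$ with $2$ punctures, each component being arbitrary in its moduli space.
   Context: $\mathcal{M}_{g,n}$ denotes the moduli space of complete finite-area hyperbolic surfaces of genus $g$ with $n$ punctures (cusps), $\mathcal{M}_g=\mathcal{M}_{g,0}$. $\partial\mathcal{M}_g$ is the boundary of the Deligne--Mumford compactification of $\mathcal{M}_g$; it is stratified, each stratum being a product of lower-dimensional moduli spaces $\mathcal{M}_{g_i,n_i}$, corresponding to the components of nodal surfaces obtained by pinching disjoint simple closed curves. *)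

theory Defs
  imports Main "HOL-Library.Multiset"
begin

text \<open>A stratum of the boundary of M_g is given by a stable (dual) graph: vertices are the
components of the nodal surface (each with its genus), edges are the nodes (pinched
curves; loops allowed); the component at vertex v lies in M_{gen v, valence v}.\<close>

definition valence :: "nat set \<Rightarrow> (nat \<Rightarrow> nat \<times> nat) \<Rightarrow> nat \<Rightarrow> nat" where
  "valence E ends v = card {e \<in> E. fst (ends e) = v} + card {e \<in> E. snd (ends e) = v}"

definition adjacent :: "nat set \<Rightarrow> (nat \<Rightarrow> nat \<times> nat) \<Rightarrow> nat \<Rightarrow> nat \<Rightarrow> bool" where
  "adjacent E ends a b \<longleftrightarrow> (\<exists>e\<in>E. ends e = (a, b) \<or> ends e = (b, a))"

definition stable_graph :: "nat set \<Rightarrow> nat set \<Rightarrow> (nat \<Rightarrow> nat \<times> nat) \<Rightarrow> (nat \<Rightarrow> nat) \<Rightarrow> bool" where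
  "stable_graph V E ends gen \<longleftrightarrow>
     finite V \<and> V \<noteq> {} \<and> finite E \<and>
     (\<forall>e\<in>E. fst (ends e) \<in> V \<and> snd (ends e) \<in> V) \<and>
     (\<forall>u\<in>V. \<forall>w\<in>V. (adjacent E ends)\<^sup>*\<^sup>* u w) \<and>
     (\<forall>v\<in>V. 2 * gen v + valence E ends v \<ge> 3)"

text \<open>Arithmetic genus of the graph: sum of vertex genera plus first Betti number.\<close>
definition graph_genus :: "nat set \<Rightarrow> nat set \<Rightarrow> (nat \<Rightarrow> nat) \<Rightarrow> int" where
  "graph_genus V E gen = int (\<Sum>v\<in>V. gen v) + int (card E) - int (card V) + 1"

text \<open>The product of moduli spaces M_{g_v,n_v}, listed by the multiset of types (g_v,n_v),
is a stratum of the boundary of the DM compactification of M_g.\<close>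
definition boundary_stratum :: "nat \<Rightarrow> (nat \<times> nat) multiset \<Rightarrow> bool" where
  "boundary_stratum g types \<longleftrightarrow>
     (\<exists>V E ends gen. stable_graph V E ends gen \<and> E \<noteq> {} \<and>
        graph_genus V E gen = int g \<and>
        image_mset (\<lambda>v. (gen v, valence E ends v)) (mset_set V) = types)"

end

theory Submission
  imports Defs
begin

lemma image_mset_constant:
  "image_mset (\<lambda>_. c) M = replicate_mset (size M) c"
  by (induction M) auto

lemma construct:
  fixes n i j g1 :: nat
  assumes n2: "n \<ge> 2" and ev: "even i" and nij: "n = i + j + 1" and j1: "j \<le> 1" and g1: "g1 \<ge> 1"
  shows "boundary_stratum (g1 + j + i div 2 + 1)
           (replicate_mset i (0, 3) + replicate_mset j (1, 2) + {#(g1, 2)#})"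
proof -
  define k where "k = i div 2"
  have ik: "i = 2 * k" using ev k_def by auto
  define V where "V = {0..<n}"
  define E where "E = {0..<n+k}"
  define ends where "ends = (\<lambda>e::nat. if e < n then (e, (e+1) mod n) else (2*(e-n)+1, 2*(e-n)+2))"
  define gen where "gen = (\<lambda>v::nat. if v = 0 then g1 else if v \<le> i then 0 else 1::nat)"
  have fstset: "{e \<in> E. fst (ends e) = v} = {v} \<union> (if odd v \<and> v \<le> i then {n + (v - 1) div 2} else {})"
    if "v < n" for v
    using that unfolding E_def ends_def ik nij by (auto split: if_splits; presburger)
  have sndset: "{e \<in> E. snd (ends e) = v} = {if v = 0 then n - 1 else v - 1} \<union>
       (if even v \<and> 2 \<le> v \<and> v \<le> i then {n + (v - 2) div 2} else {})"
    if "v < n" for v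
  proof -
    have A: "e < n \<Longrightarrow> ((e+1) mod n = v) = (e = (if v = 0 then n - 1 else v - 1))" for e
    proof -
      assume "e < n"
      then have "(e+1) mod n = (if e + 1 = n then 0 else e + 1)" by auto
      then show ?thesis using that n2 \<open>e < n\<close> by auto
    qed
    show ?thesis
      using that A unfolding E_def ends_def ik nij by (auto split: if_splits; presburger)
  qed
  have val: "valence E ends v = 2 + (if 1 \<le> v \<and> v \<le> i then 1 else 0)" if "v < n" for v
  proof -
    have c1: "card {e \<in> E. fst (ends e) = v} = 1 + (if odd v \<and> v \<le> i then 1 else 0)"
      unfolding fstset[OF that] using that by auto
    have c2: "card {e \<in> E. snd (ends e) = v} = 1 + (if even v \<and> 2 \<le> v \<and> v \<le> i then 1 else 0)"
      unfolding sndset[OF that] using that n2 by auto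
    show ?thesis unfolding valence_def c1 c2 by presburger
  qed
  have adj: "adjacent E ends v (v+1)" if "v + 1 < n" for v
    unfolding adjacent_def E_def ends_def using that by (intro bexI[of _ v]) auto
  have adjsym: "adjacent E ends a b \<Longrightarrow> adjacent E ends b a" for a b
    unfolding adjacent_def by auto
  have reach: "v < n \<Longrightarrow> (adjacent E ends)\<^sup>*\<^sup>* 0 v \<and> (adjacent E ends)\<^sup>*\<^sup>* v 0" for v
  proof (induction v)
    case 0 then show ?case by auto
  next
    case (Suc v)
    then have "adjacent E ends v (Suc v)" "adjacent E ends (Suc v) v" using adj adjsym by auto
    then show ?case using Suc
      by (meson Suc_lessD rtranclp.rtrancl_into_rtrancl converse_rtranclp_into_rtranclp)
  qed
  have stable: "stable_graph V E ends gen"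
    unfolding stable_graph_def
  proof (intro conjI ballI)
    show "finite V" "V \<noteq> {}" "finite E" using n2 unfolding V_def E_def by auto
  next
    fix e assume "e \<in> E"
    then show "fst (ends e) \<in> V" "snd (ends e) \<in> V"
      unfolding V_def E_def ends_def ik nij by (auto split: if_splits)
  next
    fix u w assume "u \<in> V" "w \<in> V"
    then show "(adjacent E ends)\<^sup>*\<^sup>* u w" using reach unfolding V_def
      by (meson atLeastLessThan_iff rtranclp_trans)
  next
    fix v assume "v \<in> V"
    then show "3 \<le> 2 * gen v + valence E ends v"
      using val[of v] g1 unfolding V_def gen_def by auto
  qed
  have Ene: "E \<noteq> {}" using n2 unfolding E_def by auto
  have genus: "graph_genus V E gen = int (g1 + j + i div 2 + 1)"
  proof -
    have Vd: "V = insert 0 ({1..i} \<union> {i+1..<n})" unfolding V_def using nij by auto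
    then have "(\<Sum>v\<in>V. gen v) = gen 0 + (\<Sum>v\<in>{1..i}. gen v) + (\<Sum>v\<in>{i+1..<n}. gen v)"
    proof -
      have d: "{1..i} \<inter> {i+1..<n} = {}" by auto
      show ?thesis using Vd sum.union_disjoint[OF _ _ d, of gen] by simp
    qed
    also have "(\<Sum>v\<in>{1..i}. gen v) = 0" unfolding gen_def by auto
    also have "(\<Sum>v\<in>{i+1..<n}. gen v) = j"
      unfolding gen_def using nij by simp
    finally have s: "(\<Sum>v\<in>V. gen v) = g1 + j" unfolding gen_def by simp
    have cV: "card V = n" and cE: "card E = n + k" unfolding V_def E_def by auto
    show ?thesis unfolding graph_genus_def s cV cE using ik k_def by simp
  qed
  have types: "image_mset (\<lambda>v. (gen v, valence E ends v)) (mset_set V) =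
      replicate_mset i (0, 3) + replicate_mset j (1, 2) + {#(g1, 2)#}"
  proof -
    let ?f = "\<lambda>v. (gen v, valence E ends v)"
    have Vd2: "V = insert 0 ({1..i} \<union> {i+1..<n})" unfolding V_def using nij by auto
    have d2: "{1..i} \<inter> {i+1..<n} = {}" by auto
    have mV: "mset_set V = add_mset 0 (mset_set {1..i} + mset_set {i+1..<n})"
      using Vd2 mset_set_Union[OF _ _ d2] by simp
    have p1: "image_mset ?f (mset_set {1..i}) = replicate_mset i (0, 3)"
    proof -
      have "image_mset ?f (mset_set {1..i}) = image_mset (\<lambda>_. (0::nat, 3::nat)) (mset_set {1..i})"
        by (rule image_mset_cong) (use val nij in \<open>auto simp: gen_def\<close>)
      then show ?thesis by (simp add: image_mset_constant)
    qed
    have p2: "image_mset ?f (mset_set {i+1..<n}) = replicate_mset j (1, 2)"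
    proof (cases "j = 0")
      case True then show ?thesis using nij by simp
    next
      case False
      then have "j = 1" using j1 by auto
      then have "{i+1..<n} = {i+1}" using nij by auto
      then show ?thesis using val[of "i+1"] \<open>j = 1\<close> nij by (simp add: gen_def)
    qed
    have p0: "?f 0 = (g1, 2)" using val[of 0] n2 by (simp add: gen_def)
    show ?thesis unfolding mV using p0 p1 p2 by simp
  qed
  show ?thesis unfolding boundary_stratum_def
    using stable Ene genus types by blast
qed

theorem lemma2p4:
  fixes g \<eta> :: nat
  assumes "g \<ge> 3" and "2 \<le> \<eta>" and "\<eta> \<le> g"
  shows "\<exists>g1 i j :: nat. 2 * g1 \<ge> g - 2 \<and> i + j + 1 = \<eta> \<and> i + 2 * j + 2 * g1 = 2 * g - 2 \<and>
           boundary_stratum g (replicate_mset i (0, 3) + replicate_mset j (1, 2) + {#(g1, 2)#})"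
proof -
  define j :: nat where "j = (if odd \<eta> then 0 else 1)"
  define i where "i = \<eta> - 1 - j"
  define g1 where "g1 = g - 1 - j - i div 2"
  have ev: "even i" unfolding i_def j_def using assms(2) by auto
  have nij: "\<eta> = i + j + 1" unfolding i_def j_def using assms(2) by auto
  have j1: "j \<le> 1" unfolding j_def by auto
  have gi: "2 * (i div 2) = i" using ev by auto
  have hg: "g \<ge> \<eta> + j - 1" using assms unfolding j_def by auto
  have g1p: "g1 \<ge> 1" unfolding g1_def using gi nij hg assms by linarith
  have geq: "g1 + j + i div 2 + 1 = g" unfolding g1_def using gi nij hg assms by linarith
  have "boundary_stratum (g1 + j + i div 2 + 1)
           (replicate_mset i (0, 3) + replicate_mset j (1, 2) + {#(g1, 2)#})"
    by (rule construct[OF assms(2) ev nij j1 g1p])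
  then have b: "boundary_stratum g (replicate_mset i (0, 3) + replicate_mset j (1, 2) + {#(g1, 2)#})"
    using geq by simp
  have c1: "2 * g1 \<ge> g - 2" unfolding g1_def using gi nij hg assms by linarith
  have c3: "i + 2 * j + 2 * g1 = 2 * g - 2" unfolding g1_def using gi nij hg assms by linarith
  show ?thesis using b c1 c3 nij by metis
qed

end
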